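(* Let $G\in\mathrm{C}^1(\mathbb{R})$ be coercive and let $V\in\mathrm{Lip}(\mathbb{R})$ be $1$-periodic. For each $\theta\in\mathbb{R}$ there exist a unique $\overline{H}(\theta)\in\mathbb{R}$ and a unique $1$-periodic $f_\theta\in\mathrm{C}^1(\mathbb{R})$ such that $\int_0^1 f_\theta(x)\,dx=\theta$ and $$f_\theta'(x)+G(f_\theta(x))+V(x)=\overline{H}(\theta)\quad\text{for all }x\in\mathbb{R}.$$
   Context: $G$ coercive means $G(p)\to\infty$ as $p\to\pm\infty$. *)

theory Defs
  imports "HOL-Analysis.Analysis"
begin

definition C1 :: "(real \<Rightarrow> real) \<Rightarrow> bool" where
  "C1 f \<longleftrightarrow> f differentiable_on UNIV \<and> continuous_on UNIV (deriv f)"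

definition coercive :: "(real \<Rightarrow> real) \<Rightarrow> bool" where
  "coercive G \<longleftrightarrow> filterlim G at_top at_top \<and> filterlim G at_top at_bot"

definition periodic1 :: "(real \<Rightarrow> real) \<Rightarrow> bool" where
  "periodic1 f \<longleftrightarrow> (\<forall>x. f (x + 1) = f x)"

definition Lip :: "(real \<Rightarrow> real) \<Rightarrow> bool" where
  "Lip V \<longleftrightarrow> (\<exists>L. L-lipschitz_on UNIV V)"

end

theory Submission
  imports Defs
begin

lemma core_pos:
  fixes w :: "real \<Rightarrow> real" and b :: real
  assumes cont: "continuous_on {0..b} w" and w0: "w 0 = 0"
    and der: "\<And>t. t \<in> {0..b} \<Longrightarrow> w t = 0 \<Longrightarrow> \<exists>d>0. (w has_real_derivative d) (at t within {0..b})"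
  shows "\<forall>t\<in>{0<..b}. w t > 0"
proof (rule ccontr)
  assume "\<not> ?thesis"
  then obtain t1 where t1: "0 < t1" "t1 \<le> b" "w t1 \<le> 0" by force
  have ev: "\<exists>e>0. \<forall>y\<in>{0..b}. y \<noteq> t \<and> dist y t < e \<longrightarrow> (w y - w t) / (y - t) > 0"
    if tt: "t \<in> {0..b}" "w t = 0" for t
  proof -
    obtain d where d: "d > 0" "(w has_real_derivative d) (at t within {0..b})" using der tt by blast
    then have "((\<lambda>y. (w y - w t) / (y - t)) \<longlongrightarrow> d) (at t within {0..b})"
      using has_field_derivative_iff by blast
    then have "eventually (\<lambda>y. 0 < (w y - w t) / (y - t)) (at t within {0..b})"
      using d(1) order_tendstoD(1) by blast
    then show ?thesis unfolding eventually_at by blast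
  qed
  obtain e where e: "e > 0" "\<forall>y\<in>{0..b}. y \<noteq> 0 \<and> dist y 0 < e \<longrightarrow> (w y - w 0) / (y - 0) > 0"
    using ev[of 0] w0 t1 by auto
  define d where "d = min (e/2) (t1/2)"
  have d: "0 < d" "d < t1" "d < e" using e t1 by (auto simp: d_def)
  have wd: "w d > 0" using e(2)[rule_format, of d] d t1 w0 by (auto simp: dist_real_def zero_less_divide_iff)
  define S where "S = {t \<in> {d..t1}. w t \<le> 0}"
  have contS: "continuous_on {d..t1} w" using cont by (rule continuous_on_subset) (use d t1 in auto)
  have "closed S" unfolding S_def
    using continuous_closed_preimage[OF contS closed_atLeastAtMost, of "{..0}"] by (simp add: vimage_def Int_def)
  have "S \<noteq> {}" using t1 d unfolding S_def by auto
  have "bdd_below S" unfolding S_def by (auto intro: bdd_belowI[of _ d])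
  define z where "z = Inf S"
  have zS: "z \<in> S" using closed_contains_Inf[OF \<open>S \<noteq> {}\<close> \<open>bdd_below S\<close> \<open>closed S\<close>] z_def by simp
  have zge: "\<And>t. t \<in> S \<Longrightarrow> z \<le> t" using \<open>bdd_below S\<close> z_def by (simp add: cInf_lower)
  have zd: "d < z" using zS wd unfolding S_def by (cases "z = d") auto
  have pos: "w t > 0" if "d \<le> t" "t < z" for t
  proof (rule ccontr)
    assume "\<not> w t > 0"
    then have "t \<in> S" using that zS unfolding S_def by auto
    then show False using zge that by force
  qed
  have wz: "w z = 0"
  proof (rule ccontr)
    assume "w z \<noteq> 0"
    then have "w z < 0" using zS unfolding S_def by auto
    have "continuous_on {d..z} w" using cont by (rule continuous_on_subset) (use zS d t1 in \<open>auto simp: S_def\<close>)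
    then obtain x where "d \<le> x" "x \<le> z" "w x = 0"
      using IVT2'[of w z 0 d] \<open>w z < 0\<close> wd zd by auto
    then show False using pos[of x] \<open>w z < 0\<close> by (cases "x = z") auto
  qed
  have z0b: "z \<in> {0..b}" using zS d t1 unfolding S_def by auto
  obtain e' where e': "e' > 0" "\<forall>y\<in>{0..b}. y \<noteq> z \<and> dist y z < e' \<longrightarrow> (w y - w z) / (y - z) > 0"
    using ev[OF z0b wz] by blast
  define y where "y = max d (z - e'/2)"
  have y: "d \<le> y" "y < z" "dist y z < e'" using zd e' by (auto simp: y_def dist_real_def)
  have "y \<in> {0..b}" using y d z0b by auto
  then have "(w y - w z) / (y - z) > 0" using e'(2) y by auto
  moreover have "w y > 0" using pos y by auto
  ultimately show False using wz y by (simp add: zero_less_divide_iff)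
qed

lemma periodic_nat: fixes w :: "real \<Rightarrow> 'b" assumes "\<forall>x. w (x + 1) = w x" shows "w (x + real n) = w x"
proof (induction n)
  case (Suc n)
  have "w (x + real (Suc n)) = w ((x + real n) + 1)" by (simp add: algebra_simps)
  then show ?case using assms Suc by simp
qed simp

lemma periodic_int: fixes w :: "real \<Rightarrow> 'b" assumes "\<forall>x. w (x + 1) = w x" shows "w (x + real_of_int k) = w x"
proof (cases "k \<ge> 0")
  case True then show ?thesis using periodic_nat[OF assms, of x "nat k"] by simp
next
  case False
  then have "w (x + real_of_int k + real (nat (-k))) = w (x + real_of_int k)"
    using periodic_nat[OF assms] by blast
  then show ?thesis using False by simp
qed

lemma periodic_frac: fixes w :: "real \<Rightarrow> 'b" assumes "\<forall>x. w (x + 1) = w x" shows "w x = w (frac x)"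
  using periodic_int[OF assms, of "frac x" "\<lfloor>x\<rfloor>"] by (simp add: frac_def)

lemma periodic_nozero:
  fixes w w' :: "real \<Rightarrow> real"
  assumes per: "\<forall>x. w (x + 1) = w x" and der: "\<And>x. (w has_real_derivative w' x) (at x)"
    and zer: "\<And>z. w z = 0 \<Longrightarrow> w' z > 0"
  shows "w x \<noteq> 0"
proof
  assume "w x = 0"
  define v where "v t = w (t + x)" for t
  have dv: "(v has_real_derivative w' (t + x)) (at t)" for t
    unfolding v_def using der[of "t + x"] DERIV_shift by blast
  have "continuous_on {0..1} v"
    using dv by (meson DERIV_isCont continuous_at_imp_continuous_on)
  moreover have "v 0 = 0" using \<open>w x = 0\<close> by (simp add: v_def)
  moreover have "\<exists>d>0. (v has_real_derivative d) (at t within {0..1})" if "v t = 0" for t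
    using zer[of "t + x"] that dv[of t] by (auto simp: v_def intro: has_field_derivative_at_within)
  ultimately have "\<forall>t\<in>{0<..1}. v t > 0" by (intro core_pos) auto
  then have "v 1 > 0" by auto
  then show False using per[rule_format, of x] \<open>w x = 0\<close> by (simp add: v_def add.commute)
qed

lemma decay_zero:
  fixes w w' :: "real \<Rightarrow> real"
  assumes der: "\<And>x. (w has_real_derivative w' x) (at x)"
    and bd: "\<And>x. \<bar>w' x\<bar> \<le> L * \<bar>w x\<bar>" and L: "L \<ge> 0" and w0: "w x0 = 0" and x: "x0 \<le> x"
  shows "w x = 0"
proof -
  define u where "u t = (w t)^2 * exp (-2*L*t)" for t
  have "u x \<le> u x0"
  proof (rule DERIV_nonpos_imp_nonincreasing[OF x])
    fix t
    have d: "(u has_real_derivative (2 * w t * w' t - 2 * L * (w t)^2) * exp (-2*L*t)) (at t)"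
      unfolding u_def by (auto intro!: derivative_eq_intros der simp: algebra_simps power2_eq_square)
    have "w t * w' t \<le> \<bar>w t\<bar> * \<bar>w' t\<bar>" by (metis abs_ge_self abs_mult)
    also have "\<dots> \<le> \<bar>w t\<bar> * (L * \<bar>w t\<bar>)" by (rule mult_left_mono[OF bd]) simp
    also have "\<dots> = L * (w t)^2" by (simp add: power2_eq_square algebra_simps)
    finally have "(2 * w t * w' t - 2 * L * (w t)^2) * exp (-2*L*t) \<le> 0"
      by (intro mult_nonpos_nonneg) auto
    then show "\<exists>y. (u has_real_derivative y) (at t) \<and> y \<le> 0" using d by blast
  qed
  then have "u x \<le> 0" using w0 by (simp add: u_def)
  then have "(w x)^2 \<le> 0" by (simp add: u_def mult_le_0_iff)
  then show ?thesis by simp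
qed

lemma C1_deriv: "C1 f \<Longrightarrow> (f has_real_derivative deriv f x) (at x)"
  unfolding C1_def differentiable_on_def
  by (simp add: DERIV_deriv_iff_real_differentiable)

lemma C1_cont: assumes "C1 f" shows "continuous_on S f"
proof -
  have "isCont f x" for x using C1_deriv[OF assms] by (rule DERIV_isCont)
  then show ?thesis by (simp add: continuous_at_imp_continuous_on)
qed

lemma cont_bounded_on:
  fixes f :: "real \<Rightarrow> real"
  assumes "continuous_on {a..b} f"
  obtains M where "M \<ge> 0" "\<And>x. x \<in> {a..b} \<Longrightarrow> \<bar>f x\<bar> \<le> M"
proof -
  have "bounded (f ` {a..b})" by (rule compact_imp_bounded[OF compact_continuous_image[OF assms compact_Icc]])
  then obtain M where M: "M > 0" "\<And>y. y \<in> f ` {a..b} \<Longrightarrow> norm y \<le> M" unfolding bounded_pos by metis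
  show ?thesis
  proof (rule that[of M])
    show "0 \<le> M" using M(1) by simp
    fix x assume "x \<in> {a..b}"
    then show "\<bar>f x\<bar> \<le> M" using M(2)[of "f x"] by simp
  qed
qed

lemma periodic_bounded:
  fixes f :: "real \<Rightarrow> real"
  assumes "continuous_on UNIV f" "periodic1 f"
  obtains M where "M \<ge> 0" "\<And>x. \<bar>f x\<bar> \<le> M"
proof -
  have cf: "continuous_on {0..1} f" using assms(1) by (rule continuous_on_subset) simp
  obtain M where M: "M \<ge> 0" "\<And>x. x \<in> {0..1} \<Longrightarrow> \<bar>f x\<bar> \<le> M"
    using cont_bounded_on[OF cf] by blast
  have "\<bar>f x\<bar> \<le> M" for x
    using periodic_frac[of f x] assms(2) M(2)[of "frac x"] unfolding periodic1_def
    by (simp add: frac_lt_1 less_imp_le)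
  then show ?thesis using that M(1) by blast
qed

lemma C1_lip:
  assumes "C1 G"
  obtains M where "M \<ge> 0" "\<And>x y. x \<in> {-R..R} \<Longrightarrow> y \<in> {-R..R} \<Longrightarrow> \<bar>G x - G y\<bar> \<le> M * \<bar>x - y\<bar>"
proof -
  have cf: "continuous_on {-R..R} (deriv G)" using assms unfolding C1_def
    by (meson continuous_on_subset subset_UNIV)
  obtain M where M: "M \<ge> 0" "\<And>x. x \<in> {-R..R} \<Longrightarrow> \<bar>deriv G x\<bar> \<le> M"
    using cont_bounded_on[OF cf] by blast
  have key: "\<bar>G y - G x\<bar> \<le> M * \<bar>y - x\<bar>" if "x \<in> {-R..R}" "y \<in> {-R..R}" "x < y" for x y
  proof -
    obtain z where z: "x < z" "z < y" "G y - G x = (y - x) * deriv G z"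
      using MVT2[OF \<open>x < y\<close>, of G "deriv G"] C1_deriv[OF assms] by blast
    have "\<bar>deriv G z\<bar> \<le> M" using M(2)[of z] z that by auto
    then show ?thesis using z(3) that(3) by (simp add: abs_mult mult.commute mult_left_mono)
  qed
  have "\<bar>G x - G y\<bar> \<le> M * \<bar>x - y\<bar>" if "x \<in> {-R..R}" "y \<in> {-R..R}" for x y
  proof -
    show ?thesis
    proof (cases x y rule: linorder_cases)
      case less then show ?thesis using key[OF that less] by (simp add: abs_minus_commute)
    next
      case equal then show ?thesis by simp
    next
      case greater then show ?thesis using key[OF that(2,1) greater] by simp
    qed
  qed
  then show ?thesis using that M(1) by blast
qed

lemma integral_pos01:
  fixes w :: "real \<Rightarrow> real"
  assumes "continuous_on {0..1} w" "\<And>x. x \<in> {0..1} \<Longrightarrow> w x > 0"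
  shows "integral {0..1} w > 0"
proof -
  obtain m where m: "m \<in> {0..1}" "\<And>x. x \<in> {0..1} \<Longrightarrow> w m \<le> w x"
    using continuous_attains_inf[OF compact_Icc _ assms(1)] by auto
  have "integral {0..1} (\<lambda>x::real. w m) \<le> integral {0..1} w"
    by (rule Henstock_Kurzweil_Integration.integral_le) (use m assms in \<open>auto intro!: integrable_continuous_interval\<close>)
  then show ?thesis using assms(2)[OF m(1)] by simp
qed

lemma mean_zero_has_zero:
  fixes w :: "real \<Rightarrow> real"
  assumes c: "continuous_on {0..1} w" and i: "integral {0..1} w = 0"
  shows "\<exists>z\<in>{0..1}. w z = 0"
proof (rule ccontr)
  assume nz: "\<not> ?thesis"
  have sgn: "w x > 0" if tt: "x \<in> {0..1}" "w 0 > 0" for x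
  proof (rule ccontr)
    assume "\<not> w x > 0"
    then have "w x < 0" using nz that by force
    have cx: "continuous_on {0..x} w" using continuous_on_subset[OF c, of "{0..x}"] that by auto
    obtain y where "0 \<le> y" "y \<le> x" "w y = 0"
      using IVT2'[of w x 0 0, OF _ _ _ cx] tt \<open>w x < 0\<close> by auto
    then show False using nz that by auto
  qed
  have sgn2: "w x < 0" if tt: "x \<in> {0..1}" "w 0 < 0" for x
  proof (rule ccontr)
    assume "\<not> w x < 0"
    then have "w x > 0" using nz that by force
    have cx: "continuous_on {0..x} w" using continuous_on_subset[OF c, of "{0..x}"] that by auto
    obtain y where "0 \<le> y" "y \<le> x" "w y = 0"
      using IVT'[of w 0 0 x, OF _ _ _ cx] tt \<open>w x > 0\<close> by auto
    then show False using nz that by auto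
  qed
  consider "w 0 > 0" | "w 0 < 0" using nz by force
  then show False
  proof cases
    case 1 then show False using integral_pos01[OF c] sgn i by auto
  next
    case 2
    have "integral {0..1} (\<lambda>x. - w x) > 0"
      by (rule integral_pos01) (use sgn2 2 c in \<open>auto intro: continuous_intros\<close>)
    then show False using i by simp
  qed
qed

lemma uniqueness:
  fixes G V f1 f2 :: "real \<Rightarrow> real"
  assumes G: "C1 G" and Vc: "continuous_on UNIV V"
    and f1: "C1 f1" "periodic1 f1" "integral {0..1} f1 = \<theta>" "\<forall>x. deriv f1 x + G (f1 x) + V x = H1"
    and f2: "C1 f2" "periodic1 f2" "integral {0..1} f2 = \<theta>" "\<forall>x. deriv f2 x + G (f2 x) + V x = H2"
  shows "H1 = H2 \<and> f1 = f2"
proof -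
  have d1: "(f1 has_real_derivative H1 - G (f1 x) - V x) (at x)" for x
  proof -
    have "H1 - G (f1 x) - V x = deriv f1 x" using f1(4)[rule_format, of x] by linarith
    then show ?thesis using C1_deriv[OF f1(1), of x] by simp
  qed
  have d2: "(f2 has_real_derivative H2 - G (f2 x) - V x) (at x)" for x
  proof -
    have "H2 - G (f2 x) - V x = deriv f2 x" using f2(4)[rule_format, of x] by linarith
    then show ?thesis using C1_deriv[OF f2(1), of x] by simp
  qed
  define w where "w x = f2 x - f1 x" for x
  define w' where "w' x = (H2 - G (f2 x) - V x) - (H1 - G (f1 x) - V x)" for x
  have dw: "(w has_real_derivative w' x) (at x)" for x
    unfolding w_def w'_def by (intro derivative_intros d1 d2)
  have per: "\<forall>x. w (x + 1) = w x" using f1(2) f2(2) by (simp add: w_def periodic1_def)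
  have cw: "continuous_on UNIV w" unfolding w_def by (intro continuous_intros C1_cont f1(1) f2(1))
  have "integral {0..1} w = integral {0..1} f2 - integral {0..1} f1"
    unfolding w_def
    by (rule integral_diff) (auto intro!: integrable_continuous_interval C1_cont f1(1) f2(1))
  then have "integral {0..1} w = 0" using f1(3) f2(3) by simp
  moreover have "continuous_on {0..1} w" using cw by (rule continuous_on_subset) simp
  ultimately obtain z where wz: "w z = 0" using mean_zero_has_zero by blast
  have HH: "H1 = H2"
  proof (rule ccontr)
    assume "H1 \<noteq> H2"
    then consider "H1 < H2" | "H2 < H1" by linarith
    then show False
    proof cases
      case 1
      have "w z \<noteq> 0"
        by (rule periodic_nozero[OF per dw]) (use 1 in \<open>simp add: w_def w'_def\<close>)
      then show False using wz by simp
    next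
      case 2
      have per': "\<forall>x. (\<lambda>x. - w x) (x+1) = (\<lambda>x. - w x) x" using per by simp
      have dw': "((\<lambda>x. - w x) has_real_derivative - w' x) (at x)" for x using dw[of x] by (rule DERIV_minus)
      have "(\<lambda>x. - w x) z \<noteq> 0"
        by (rule periodic_nozero[OF per' dw']) (use 2 in \<open>simp add: w_def w'_def\<close>)
      then show False using wz by simp
    qed
  qed
  obtain M1 where M1: "\<And>x. \<bar>f1 x\<bar> \<le> M1" using periodic_bounded[OF C1_cont[OF f1(1)] f1(2)] by blast
  obtain M2 where M2: "\<And>x. \<bar>f2 x\<bar> \<le> M2" using periodic_bounded[OF C1_cont[OF f2(1)] f2(2)] by blast
  define R where "R = max M1 M2"
  obtain L where L: "L \<ge> 0" "\<And>x y. x \<in> {-R..R} \<Longrightarrow> y \<in> {-R..R} \<Longrightarrow> \<bar>G x - G y\<bar> \<le> L * \<bar>x - y\<bar>"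
    using C1_lip[OF G, of R] by blast
  have bd: "\<bar>w' x\<bar> \<le> L * \<bar>w x\<bar>" for x
  proof -
    have "f1 x \<in> {-R..R}" "f2 x \<in> {-R..R}" using M1[of x] M2[of x] by (auto simp: R_def)
    then have "\<bar>G (f1 x) - G (f2 x)\<bar> \<le> L * \<bar>f1 x - f2 x\<bar>" by (rule L(2))
    then show ?thesis by (simp add: w'_def w_def HH abs_minus_commute)
  qed
  have "w x = 0" for x
  proof -
    define n where "n = nat \<lceil>z - x\<rceil>"
    have "z \<le> x + real n" unfolding n_def by linarith
    then have "w (x + real n) = 0" by (rule decay_zero[OF dw bd L(1) wz])
    then show ?thesis using periodic_nat[OF per] by simp
  qed
  then have "f1 = f2" by (auto simp: w_def)
  then show ?thesis using HH by simp
qed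

lemma int_bounds:
  fixes h :: "real \<Rightarrow> real"
  assumes c: "continuous_on {a..b} h" and ab: "a \<le> b"
    and lo: "\<And>s. s \<in> {a..b} \<Longrightarrow> lo \<le> h s" and hi: "\<And>s. s \<in> {a..b} \<Longrightarrow> h s \<le> hi"
  shows "lo * (b - a) \<le> integral {a..b} h" "integral {a..b} h \<le> hi * (b - a)"
proof -
  have i: "h integrable_on {a..b}" using c by (rule integrable_continuous_interval)
  have "integral {a..b} (\<lambda>x::real. lo) \<le> integral {a..b} h"
    by (rule Henstock_Kurzweil_Integration.integral_le) (use i lo in auto)
  then show "lo * (b - a) \<le> integral {a..b} h" using ab by (simp add: mult.commute)
  have "integral {a..b} h \<le> integral {a..b} (\<lambda>x::real. hi)"
    by (rule Henstock_Kurzweil_Integration.integral_le) (use i hi in auto)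
  then show "integral {a..b} h \<le> hi * (b - a)" using ab by (simp add: mult.commute)
qed

lemma int_abs_bound:
  fixes h :: "real \<Rightarrow> real"
  assumes c: "continuous_on {a..b} h" and ab: "a \<le> b" and hb: "\<And>s. s \<in> {a..b} \<Longrightarrow> \<bar>h s\<bar> \<le> C"
  shows "\<bar>integral {a..b} h\<bar> \<le> C * (b - a)"
proof -
  have lo: "\<And>s. s \<in> {a..b} \<Longrightarrow> -C \<le> h s" using hb by (force simp: abs_le_iff)
  have hi: "\<And>s. s \<in> {a..b} \<Longrightarrow> h s \<le> C" using hb by (force simp: abs_le_iff)
  have "- C * (b - a) \<le> integral {a..b} h" by (rule int_bounds(1)[OF c ab lo hi])
  moreover have "integral {a..b} h \<le> C * (b - a)" by (rule int_bounds(2)[OF c ab lo hi])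
  ultimately show ?thesis by (simp add: abs_le_iff)
qed

lemma int_lip:
  fixes h :: "real \<Rightarrow> real"
  assumes c: "continuous_on UNIV h" and hb: "\<And>s. \<bar>h s\<bar> \<le> C"
  shows "\<bar>integral {0..t} h - integral {0..t'} h\<bar> \<le> C * \<bar>t - t'\<bar>"
proof -
  have C: "C \<ge> 0" using hb[of 0] by linarith
  have main: "\<bar>integral {0..t} h - integral {0..t'} h\<bar> \<le> C * \<bar>t - t'\<bar>" if tt: "t' \<le> t" for t t'
  proof (cases "t' \<ge> 0")
    case True
    have "integral {0..t'} h + integral {t'..t} h = integral {0..t} h"
      by (rule Henstock_Kurzweil_Integration.integral_combine) (use True tt in \<open>auto intro!: integrable_continuous_interval continuous_on_subset[OF c]\<close>)
    moreover have "\<bar>integral {t'..t} h\<bar> \<le> C * (t - t')"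
      by (rule int_abs_bound) (use tt hb in \<open>auto intro: continuous_on_subset[OF c]\<close>)
    ultimately show ?thesis using tt by simp
  next
    case False
    then have e: "integral {0..t'} h = 0" by simp
    show ?thesis
    proof (cases "t \<ge> 0")
      case True
      have "\<bar>integral {0..t} h\<bar> \<le> C * (t - 0)"
        by (rule int_abs_bound) (use True hb in \<open>auto intro: continuous_on_subset[OF c]\<close>)
      also have "\<dots> \<le> C * \<bar>t - t'\<bar>" using False True C by (intro mult_left_mono) auto
      finally show ?thesis using e by simp
    next
      case False
      then show ?thesis using e C by simp
    qed
  qed
  show ?thesis
  proof (cases "t' \<le> t")
    case True then show ?thesis by (rule main)
  next
    case False then show ?thesis using main[of t t'] by (simp add: abs_minus_commute)
  qed
qed

lemma int_exp:
  fixes L t :: real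
  assumes L: "L > 0" and t: "t \<ge> 0"
  shows "integral {0..t} (\<lambda>s. exp (2* L * s)) = (exp (2*L*t) - 1) / (2*L)"
proof -
  have "((\<lambda>s. exp (2* L * s)) has_integral (exp (2*L*t) / (2*L) - exp (2*L*0) / (2*L))) {0..t}"
  proof (rule fundamental_theorem_of_calculus[OF t])
    fix x assume "x \<in> {0..t}"
    have "((\<lambda>s. exp (2* L * s) / (2*L)) has_real_derivative exp (2*L*x)) (at x within {0..t})"
      using L by (auto intro!: derivative_eq_intros)
    then show "((\<lambda>s. exp (2* L * s) / (2*L)) has_vector_derivative exp (2*L*x)) (at x within {0..t})"
      by (simp add: has_real_derivative_iff_has_vector_derivative)
  qed
  then show ?thesis by (simp add: integral_unique diff_divide_distrib)
qed

lemma xexp_bound: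
  fixes L x :: real assumes "L > 0" "x \<ge> 0"
  shows "x * exp (- (2*L*x)) \<le> 1 / (2*L)"
proof -
  have "1 + 2*L*x \<le> exp (2*L*x)" by (rule exp_ge_add_one_self)
  then have "2*L*x \<le> exp (2*L*x)" by linarith
  then have "x \<le> exp (2*L*x) / (2*L)" using assms by (simp add: field_simps)
  then have "x * exp (- (2*L*x)) \<le> exp (2*L*x) / (2*L) * exp (- (2*L*x))"
    by (rule mult_right_mono) simp
  also have "\<dots> = 1 / (2*L)" by (simp add: exp_minus field_simps)
  finally show ?thesis .
qed

lemma int_abs_le:
  fixes d b :: "real \<Rightarrow> real"
  assumes "continuous_on {0..t} d" "continuous_on {0..t} b" "\<And>u. u \<in> {0..t} \<Longrightarrow> \<bar>d u\<bar> \<le> b u"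
  shows "\<bar>integral {0..t} d\<bar> \<le> integral {0..t} b"
proof -
  have id: "d integrable_on {0..t}" "b integrable_on {0..t}"
    using assms(1,2) by (auto intro: integrable_continuous_interval)
  have "integral {0..t} d \<le> integral {0..t} b"
    by (rule Henstock_Kurzweil_Integration.integral_le[OF id]) (use assms(3) in force)
  moreover have "integral {0..t} (\<lambda>u. - b u) \<le> integral {0..t} d"
    by (rule Henstock_Kurzweil_Integration.integral_le) (use id assms(3) in \<open>force intro: integrable_neg\<close>)+
  ultimately show ?thesis by (simp add: abs_le_iff)
qed

locale pic_setup =
  fixes V K :: "real \<Rightarrow> real" and L BV BK :: real
  assumes L: "L > 0" and Vc: "continuous_on UNIV V" and Kc: "continuous_on UNIV K"
    and Klip: "\<And>x y. \<bar>K x - K y\<bar> \<le> L * \<bar>x - y\<bar>" and Vb: "\<And>s. \<bar>V s\<bar> \<le> BV" and Kb: "\<And>y. \<bar>K y\<bar> \<le> BK"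
begin

definition "pint H g t = integral {0..t} (\<lambda>u. H - V u - K (exp (2 * L * u) * g u))"
definition "pic H a g t = exp (- (2 * L * max 0 t)) * (a + pint H g t)"
definition "PT H a g = Bcontfun (pic H a (apply_bcontfun g))"

lemma integrand_cont:
  assumes "continuous_on UNIV g" shows "continuous_on UNIV (\<lambda>u. H - V u - K (exp (2 * L * u) * g u))"
proof -
  have "continuous_on UNIV (\<lambda>u. exp (2 * L * u) * g u)" by (intro continuous_intros assms)
  then have "continuous_on UNIV (\<lambda>u. K (exp (2 * L * u) * g u))"
    by (rule continuous_on_compose2[OF Kc]) auto
  then show ?thesis by (intro continuous_intros Vc)
qed

lemma integrand_bound: "\<bar>H - V u - K y\<bar> \<le> \<bar>H\<bar> + BV + BK"
  using Vb[of u] Kb[of y] by linarith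

lemma pint_lip: "continuous_on UNIV g \<Longrightarrow> \<bar>pint H g t - pint H g t'\<bar> \<le> (\<bar>H\<bar> + BV + BK) * \<bar>t - t'\<bar>"
  unfolding pint_def by (rule int_lip[OF integrand_cont]) (auto intro: integrand_bound)

lemma pint_neg: "t \<le> 0 \<Longrightarrow> pint H g t = 0"
  unfolding pint_def by (cases "t = 0") auto

lemma pint_cont: assumes "continuous_on UNIV g" shows "continuous_on UNIV (pint H g)"
proof (rule lipschitz_on_continuous_on)
  show "(\<bar>H\<bar> + BV + BK)-lipschitz_on UNIV (pint H g)"
  proof (rule lipschitz_onI)
    fix x y :: real
    show "dist (pint H g x) (pint H g y) \<le> (\<bar>H\<bar> + BV + BK) * dist x y"
      using pint_lip[OF assms, of H x y] by (simp add: dist_real_def)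
  next
    show "0 \<le> \<bar>H\<bar> + BV + BK" using Vb[of 0] Kb[of 0] by linarith
  qed
qed

lemma pic_bcontfun: assumes g: "continuous_on UNIV g" shows "pic H a g \<in> bcontfun"
proof -
  define C where "C = \<bar>H\<bar> + BV + BK"
  have cont: "continuous_on UNIV (pic H a g)"
    unfolding pic_def by (intro continuous_intros pint_cont g)
  have bd: "\<bar>pic H a g t\<bar> \<le> \<bar>a\<bar> + C / (2 * L)" for t
  proof (cases "t \<le> 0")
    case True
    then show ?thesis using L Vb[of 0] Kb[of 0] by (simp add: pic_def pint_neg C_def)
  next
    case False
    have pb: "\<bar>pint H g t\<bar> \<le> C * t" using pint_lip[OF g, of H t 0] pint_neg[of 0] False by (simp add: C_def)
    have e: "0 < exp (- (2 * L * t))" "exp (- (2 * L * t)) \<le> 1" using L False by auto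
    have "\<bar>pic H a g t\<bar> \<le> exp (- (2 * L * t)) * (\<bar>a\<bar> + \<bar>pint H g t\<bar>)"
      using False e by (simp add: pic_def abs_mult)
    also have "\<dots> \<le> exp (- (2 * L * t)) * \<bar>a\<bar> + C * (t * exp (- (2 * L * t)))"
      using pb e by (simp add: algebra_simps mult_left_mono)
    also have "\<dots> \<le> \<bar>a\<bar> + C * (1 / (2 * L))"
    proof (rule add_mono)
      show "exp (- (2 * L * t)) * \<bar>a\<bar> \<le> \<bar>a\<bar>" using e by (simp add: mult_left_le_one_le)
      have "C \<ge> 0" using Vb[of 0] Kb[of 0] by (simp add: C_def)
      then show "C * (t * exp (- (2 * L * t))) \<le> C * (1 / (2 * L))"
        using xexp_bound[OF L, of t] False by (intro mult_left_mono) auto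
    qed
    finally show ?thesis by simp
  qed
  have "bounded (range (pic H a g))"
    unfolding bounded_iff using bd by (auto simp del: abs_le_D1)
  then show ?thesis using cont by (simp add: bcontfun_def)
qed

lemma PT_apply: "apply_bcontfun (PT H a g) = pic H a (apply_bcontfun g)"
  unfolding PT_def by (rule Bcontfun_inverse[OF pic_bcontfun]) simp

end

context pic_setup begin

lemma pint_diff_K:
  fixes g1 g2 :: "real \<Rightarrow>\<^sub>C real"
  assumes t: "t \<ge> 0"
  shows "\<bar>pint H g1 t - pint H g2 t\<bar> \<le> L * dist g1 g2 * ((exp (2 * L * t) - 1) / (2 * L))"
proof -
  define D where "D = dist g1 g2"
  define h1 where "h1 u = H - V u - K (exp (2 * L * u) * g1 u)" for u
  define h2 where "h2 u = H - V u - K (exp (2 * L * u) * g2 u)" for u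
  have c1: "continuous_on UNIV h1" unfolding h1_def by (rule integrand_cont) simp
  have c2: "continuous_on UNIV h2" unfolding h2_def by (rule integrand_cont) simp
  have c1s: "continuous_on {0..t} h1" using c1 by (rule continuous_on_subset) simp
  have c2s: "continuous_on {0..t} h2" using c2 by (rule continuous_on_subset) simp
  have "pint H g1 t - pint H g2 t = integral {0..t} h1 - integral {0..t} h2"
    unfolding pint_def h1_def h2_def by simp
  also have "\<dots> = integral {0..t} (\<lambda>u. h1 u - h2 u)"
    by (rule integral_diff[symmetric, OF integrable_continuous_interval[OF c1s] integrable_continuous_interval[OF c2s]])
  also have "\<bar>\<dots>\<bar> \<le> integral {0..t} (\<lambda>u. L * D * exp (2 * L * u))"
  proof (rule int_abs_le)
    show "continuous_on {0..t} (\<lambda>u. h1 u - h2 u)"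
      by (rule continuous_on_diff[OF c1s c2s])
    show "continuous_on {0..t} (\<lambda>u. L * D * exp (2 * L * u))" by (intro continuous_intros)
    fix u
    have "\<bar>h1 u - h2 u\<bar> = \<bar>K (exp (2 * L * u) * g2 u) - K (exp (2 * L * u) * g1 u)\<bar>" by (simp add: h1_def h2_def)
    also have "\<dots> \<le> L * \<bar>exp (2 * L * u) * g2 u - exp (2 * L * u) * g1 u\<bar>" by (rule Klip)
    also have "\<dots> = L * exp (2 * L * u) * \<bar>g2 u - g1 u\<bar>" by (simp add: abs_mult right_diff_distrib[symmetric])
    also have "\<dots> \<le> L * exp (2 * L * u) * D"
    proof (rule mult_left_mono)
      show "\<bar>g2 u - g1 u\<bar> \<le> D" using dist_bounded[of g1 u g2] unfolding D_def dist_real_def by (simp add: abs_minus_commute)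
      show "0 \<le> L * exp (2 * L * u)" using L by simp
    qed
    finally show "\<bar>h1 u - h2 u\<bar> \<le> L * D * exp (2 * L * u)"
      by (simp add: algebra_simps)
  qed
  also have "\<dots> = L * D * ((exp (2 * L * t) - 1) / (2 * L))"
    using int_exp[OF L t] by simp
  finally show ?thesis by (simp add: D_def)
qed

lemma contraction: "dist (PT H a g1) (PT H a g2) \<le> 1/2 * dist g1 g2"
proof (rule dist_bound)
  fix t
  show "dist (PT H a g1 t) (PT H a g2 t) \<le> 1/2 * dist g1 g2"
  proof (cases "t \<le> 0")
    case True then show ?thesis by (simp add: PT_apply pic_def pint_neg)
  next
    case False
    have "dist (PT H a g1 t) (PT H a g2 t) = exp (- (2 * L * t)) * \<bar>pint H g1 t - pint H g2 t\<bar>"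
      using False by (simp add: PT_apply pic_def dist_real_def abs_mult right_diff_distrib[symmetric])
    also have "\<dots> \<le> exp (- (2 * L * t)) * (L * dist g1 g2 * ((exp (2 * L * t) - 1) / (2 * L)))"
      using pint_diff_K[of t H g1 g2] False by (intro mult_left_mono) auto
    also have "\<dots> = dist g1 g2 * (1 - exp (- (2 * L * t))) / 2"
      using L by (simp add: field_simps exp_minus)
    also have "\<dots> \<le> 1/2 * dist g1 g2" by (simp add: mult_left_le)
    finally show ?thesis .
  qed
qed

definition "fixp H a = (THE g. PT H a g = g)"

lemma fixp: "PT H a (fixp H a) = fixp H a"
proof -
  have "\<exists>!g. PT H a g = g"
    by (rule banach_fix_type[of "1/2"]) (use contraction in auto)
  then show ?thesis unfolding fixp_def by (rule theI')
qed

definition "sol H a t = exp (2 * L * max 0 t) * apply_bcontfun (fixp H a) t"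

lemma sol_cont: "continuous_on UNIV (sol H a)"
  unfolding sol_def by (intro continuous_intros) simp

lemma sol_eq: "sol H a t = a + integral {0..t} (\<lambda>u. H - V u - K (sol H a u))"
proof -
  have "apply_bcontfun (fixp H a) t = pic H a (fixp H a) t"
    using fixp[of H a] PT_apply by metis
  then have "sol H a t = a + pint H (fixp H a) t"
    by (simp add: sol_def pic_def exp_minus field_simps)
  also have "pint H (fixp H a) t = integral {0..t} (\<lambda>u. H - V u - K (sol H a u))"
    unfolding pint_def by (rule integral_cong) (simp add: sol_def)
  finally show ?thesis .
qed

lemma sol_0: "sol H a 0 = a"
  using sol_eq[of H a 0] by simp

lemma fixp_stab: "dist (fixp H1 a1) (fixp H2 a2) \<le> 2 * (\<bar>a1 - a2\<bar> + \<bar>H1 - H2\<bar> / (2 * L))"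
proof -
  define g1 where "g1 = fixp H1 a1"
  define g2 where "g2 = fixp H2 a2"
  have E: "dist (PT H1 a1 g2) (PT H2 a2 g2) \<le> \<bar>a1 - a2\<bar> + \<bar>H1 - H2\<bar> / (2 * L)"
  proof (rule dist_bound)
    fix t
    show "dist (PT H1 a1 g2 t) (PT H2 a2 g2 t) \<le> \<bar>a1 - a2\<bar> + \<bar>H1 - H2\<bar> / (2 * L)"
    proof (cases "t \<le> 0")
      case True then show ?thesis using L by (simp add: PT_apply pic_def pint_neg dist_real_def)
    next
      case False
      have c: "continuous_on UNIV (\<lambda>u. H - V u - K (exp (2 * L * u) * g2 u))" for H by (rule integrand_cont) simp
      have cs: "continuous_on {0..t} (\<lambda>u. H - V u - K (exp (2 * L * u) * g2 u))" for H
        using c by (rule continuous_on_subset) simp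
      have "pint H1 g2 t - pint H2 g2 t = integral {0..t} (\<lambda>u. (H1 - V u - K (exp (2 * L * u) * g2 u)) - (H2 - V u - K (exp (2 * L * u) * g2 u)))"
        unfolding pint_def
        by (rule integral_diff[symmetric, OF integrable_continuous_interval[OF cs] integrable_continuous_interval[OF cs]])
      also have "\<dots> = (H1 - H2) * t" using False by simp
      finally have pd: "pint H1 g2 t - pint H2 g2 t = (H1 - H2) * t" .
      have "PT H1 a1 g2 t - PT H2 a2 g2 t = exp (- (2 * L * t)) * ((a1 + pint H1 g2 t) - (a2 + pint H2 g2 t))"
        using False by (simp add: PT_apply pic_def right_diff_distrib)
      also have "(a1 + pint H1 g2 t) - (a2 + pint H2 g2 t) = (a1 - a2) + (H1 - H2) * t" using pd by linarith
      finally have "dist (PT H1 a1 g2 t) (PT H2 a2 g2 t) = exp (- (2 * L * t)) * \<bar>(a1 - a2) + (H1 - H2) * t\<bar>"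
        by (simp add: dist_real_def abs_mult)
      also have "\<dots> \<le> exp (- (2 * L * t)) * (\<bar>a1 - a2\<bar> + \<bar>H1 - H2\<bar> * t)"
        using False by (intro mult_left_mono) (auto simp: abs_mult intro: order.trans[OF abs_triangle_ineq])
      also have "\<dots> = exp (- (2 * L * t)) * \<bar>a1 - a2\<bar> + \<bar>H1 - H2\<bar> * (t * exp (- (2 * L * t)))"
        by (simp add: algebra_simps)
      also have "\<dots> \<le> \<bar>a1 - a2\<bar> + \<bar>H1 - H2\<bar> * (1 / (2 * L))"
      proof (rule add_mono)
        show "exp (- (2 * L * t)) * \<bar>a1 - a2\<bar> \<le> \<bar>a1 - a2\<bar>" using False L by (simp add: mult_left_le_one_le)
        show "\<bar>H1 - H2\<bar> * (t * exp (- (2 * L * t))) \<le> \<bar>H1 - H2\<bar> * (1 / (2 * L))"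
          using xexp_bound[OF L, of t] False by (intro mult_left_mono) auto
      qed
      finally show ?thesis by simp
    qed
  qed
  have "dist g1 g2 = dist (PT H1 a1 g1) (PT H2 a2 g2)" using fixp g1_def g2_def by simp
  also have "\<dots> \<le> dist (PT H1 a1 g1) (PT H1 a1 g2) + dist (PT H1 a1 g2) (PT H2 a2 g2)"
    by (rule dist_triangle)
  also have "\<dots> \<le> 1/2 * dist g1 g2 + (\<bar>a1 - a2\<bar> + \<bar>H1 - H2\<bar> / (2 * L))"
    using contraction E by (rule add_mono)
  finally show ?thesis unfolding g1_def g2_def by simp
qed

definition "Kc = 2 * exp (2 * L) * (1 + 1 / (2 * L))"

lemma sol_stab:
  assumes t: "t \<in> {0..1}"
  shows "\<bar>sol H1 a1 t - sol H2 a2 t\<bar> \<le> Kc * (\<bar>a1 - a2\<bar> + \<bar>H1 - H2\<bar>)"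
proof -
  have "sol H1 a1 t - sol H2 a2 t = exp (2 * L * t) * (fixp H1 a1 t - fixp H2 a2 t)"
    using t by (simp add: sol_def right_diff_distrib)
  then have "\<bar>sol H1 a1 t - sol H2 a2 t\<bar> = exp (2 * L * t) * dist (fixp H1 a1 t) (fixp H2 a2 t)"
    by (simp add: dist_real_def abs_mult)
  also have "\<dots> \<le> exp (2 * L) * (2 * (\<bar>a1 - a2\<bar> + \<bar>H1 - H2\<bar> / (2 * L)))"
  proof (rule mult_mono)
    show "exp (2 * L * t) \<le> exp (2 * L)" using t L by simp
    show "dist (fixp H1 a1 t) (fixp H2 a2 t) \<le> 2 * (\<bar>a1 - a2\<bar> + \<bar>H1 - H2\<bar> / (2 * L))"
      by (rule order.trans[OF dist_bounded fixp_stab])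
  qed auto
  also have "\<dots> \<le> Kc * (\<bar>a1 - a2\<bar> + \<bar>H1 - H2\<bar>)"
  proof -
    have "\<bar>H1 - H2\<bar> / (2 * L) \<le> (1 + 1 / (2 * L)) * \<bar>H1 - H2\<bar>" using L by (simp add: field_simps)
    moreover have "\<bar>a1 - a2\<bar> \<le> (1 + 1 / (2 * L)) * \<bar>a1 - a2\<bar>" using L by (simp add: field_simps)
    ultimately have "2 * (\<bar>a1 - a2\<bar> + \<bar>H1 - H2\<bar> / (2 * L)) \<le> 2 * (1 + 1 / (2 * L)) * (\<bar>a1 - a2\<bar> + \<bar>H1 - H2\<bar>)"
      by (simp add: algebra_simps)
    then have "exp (2 * L) * (2 * (\<bar>a1 - a2\<bar> + \<bar>H1 - H2\<bar> / (2 * L))) \<le> exp (2 * L) * (2 * (1 + 1 / (2 * L)) * (\<bar>a1 - a2\<bar> + \<bar>H1 - H2\<bar>))"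
      by (rule mult_left_mono) simp
    moreover have "Kc * (\<bar>a1 - a2\<bar> + \<bar>H1 - H2\<bar>) = exp (2 * L) * (2 * (1 + 1 / (2 * L)) * (\<bar>a1 - a2\<bar> + \<bar>H1 - H2\<bar>))"
      unfolding Kc_def by (simp only: mult.assoc mult.left_commute)
    ultimately show ?thesis by linarith
  qed
  finally show ?thesis .
qed

end

context pic_setup begin

lemma integrand_sol_cont: "continuous_on UNIV (\<lambda>u. H - V u - K (sol H a u))"
proof -
  have "continuous_on UNIV (\<lambda>u. K (sol H a u))"
    by (rule continuous_on_compose2[OF Kc sol_cont]) auto
  then show ?thesis by (intro continuous_intros Vc)
qed

lemma sol_fun: "(\<lambda>t. a + integral {0..t} (\<lambda>u. H - V u - K (sol H a u))) = sol H a"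
  by (rule ext) (rule sol_eq[symmetric])

lemma sol_deriv_within:
  assumes t: "t \<in> {0..b}"
  shows "(sol H a has_real_derivative H - V t - K (sol H a t)) (at t within {0..b})"
proof -
  have c: "continuous_on {0..b} (\<lambda>u. H - V u - K (sol H a u))"
    using integrand_sol_cont by (rule continuous_on_subset) simp
  have "((\<lambda>t. a + integral {0..t} (\<lambda>u. H - V u - K (sol H a u))) has_real_derivative 0 + (H - V t - K (sol H a t))) (at t within {0..b})"
    by (rule DERIV_add[OF DERIV_const integral_has_real_derivative[OF c t]])
  then show ?thesis by (simp only: sol_fun add_0_left)
qed

lemma sol_deriv_at:
  assumes t: "t > 0"
  shows "(sol H a has_real_derivative H - V t - K (sol H a t)) (at t)"
proof -
  have "t \<in> interior {0..t+1}" using t by simp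
  then have "at t within {0..t+1} = at t" by (rule at_within_interior)
  moreover have "(sol H a has_real_derivative H - V t - K (sol H a t)) (at t within {0..t+1})"
    by (rule sol_deriv_within) (use t in auto)
  ultimately show ?thesis by simp
qed

lemma P_bounds: "a + H - (BV + BK) \<le> sol H a 1" "sol H a 1 \<le> a + H + (BV + BK)"
proof -
  have c: "continuous_on {0..1} (\<lambda>u. H - V u - K (sol H a u))"
    using integrand_sol_cont by (rule continuous_on_subset) simp
  have lo: "H - (BV + BK) \<le> H - V u - K (sol H a u)" for u
    using Vb[of u] Kb[of "sol H a u"] unfolding abs_le_iff by linarith
  have hi: "H - V u - K (sol H a u) \<le> H + (BV + BK)" for u
    using Vb[of u] Kb[of "sol H a u"] unfolding abs_le_iff by linarith
  show "a + H - (BV + BK) \<le> sol H a 1"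
    using int_bounds(1)[OF c _ lo hi] sol_eq[of H a 1] by simp
  show "sol H a 1 \<le> a + H + (BV + BK)"
    using int_bounds(2)[OF c _ lo hi] sol_eq[of H a 1] by simp
qed

lemma P_mono:
  assumes H: "H1 < H2"
  shows "sol H1 a 1 < sol H2 a 1"
proof -
  define w where "w t = sol H2 a t - sol H1 a t" for t
  have "continuous_on {0..1} w" unfolding w_def
    by (intro continuous_on_diff continuous_on_subset[OF sol_cont]) auto
  moreover have "w 0 = 0" by (simp add: w_def sol_0)
  moreover have "\<exists>d>0. (w has_real_derivative d) (at t within {0..1})" if "t \<in> {0..1}" "w t = 0" for t
  proof -
    have "(w has_real_derivative (H2 - V t - K (sol H2 a t)) - (H1 - V t - K (sol H1 a t))) (at t within {0..1})"
      unfolding w_def by (rule DERIV_diff[OF sol_deriv_within[OF that(1)] sol_deriv_within[OF that(1)]])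
    moreover have "(H2 - V t - K (sol H2 a t)) - (H1 - V t - K (sol H1 a t)) = H2 - H1"
      using that(2) by (simp add: w_def)
    ultimately show ?thesis using H by (intro exI[of _ "H2 - H1"]) simp
  qed
  ultimately have "\<forall>t\<in>{0<..1}. w t > 0" by (rule core_pos)
  then show ?thesis by (simp add: w_def)
qed

lemma P_stab: "\<bar>sol H1 a1 1 - sol H2 a2 1\<bar> \<le> Kc * (\<bar>a1 - a2\<bar> + \<bar>H1 - H2\<bar>)"
  by (rule sol_stab) simp

lemma mean_stab: "\<bar>integral {0..1} (sol H1 a1) - integral {0..1} (sol H2 a2)\<bar> \<le> Kc * (\<bar>a1 - a2\<bar> + \<bar>H1 - H2\<bar>)"
proof -
  have c1: "continuous_on {0..1} (sol H1 a1)" and c2: "continuous_on {0..1} (sol H2 a2)"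
    by (rule continuous_on_subset[OF sol_cont], simp)+
  have "integral {0..1} (sol H1 a1) - integral {0..1} (sol H2 a2) = integral {0..1} (\<lambda>t. sol H1 a1 t - sol H2 a2 t)"
    by (rule integral_diff[symmetric, OF integrable_continuous_interval[OF c1] integrable_continuous_interval[OF c2]])
  also have "\<bar>\<dots>\<bar> \<le> Kc * (\<bar>a1 - a2\<bar> + \<bar>H1 - H2\<bar>) * (1 - 0)"
    by (rule int_abs_bound[OF continuous_on_diff[OF c1 c2]]) (auto intro: sol_stab)
  finally show ?thesis by simp
qed

end

lemma deriv_shift_within:
  fixes s :: "real \<Rightarrow> real"
  assumes "(s has_real_derivative D) (at t within {a..b})"
  shows "((\<lambda>y. s (y + k)) has_real_derivative D) (at (t - k) within {a - k..b - k})"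
proof -
  have img: "(\<lambda>y. y + k) ` {a - k..b - k} = {a..b}" by simp
  have "(s has_real_derivative D) (at ((\<lambda>y. y + k) (t - k)) within ((\<lambda>y. y + k) ` {a - k..b - k}))"
    using assms by (simp only: img) simp
  moreover have "((\<lambda>y. y + k) has_real_derivative 1) (at (t - k) within {a - k..b - k})"
    by (auto intro!: derivative_eq_intros)
  ultimately have "(s \<circ> (\<lambda>y. y + k) has_real_derivative D * 1) (at (t - k) within {a - k..b - k})"
    by (rule DERIV_image_chain)
  then show ?thesis by (simp add: o_def)
qed

lemma deriv_within_Un:
  fixes f :: "real \<Rightarrow> real"
  assumes "(f has_real_derivative D) (at x within S)" "(f has_real_derivative D) (at x within T)"
  shows "(f has_real_derivative D) (at x within (S \<union> T))"
  using assms unfolding has_field_derivative_iff by (simp add: Lim_within_Un)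

lemma glue:
  fixes s d :: "real \<Rightarrow> real"
  assumes der: "\<And>t. t \<in> {0..1} \<Longrightarrow> (s has_real_derivative d t) (at t within {0..1})"
    and s1: "s 1 = s 0" and d1: "d 1 = d 0"
  shows "((\<lambda>x. s (frac x)) has_real_derivative d (frac x)) (at x)"
proof -
  define n where "n = real_of_int \<lfloor>x\<rfloor>"
  have xn: "n \<le> x" "x < n + 1" unfolding n_def by linarith+
  have fr: "frac x = x - n" unfolding n_def frac_def by simp
  have onR: "s (frac y) = s (y - n)" if "y \<in> {n..n+1}" for y
  proof (cases "y = n + 1")
    case True
    have "y \<in> \<int>" using True unfolding n_def by simp
    then have "frac y = 0" by simp
    then have "s (frac y) = s 0" by (simp only:)
    moreover have "y - n = 1" using True by simp
    ultimately show ?thesis using s1 by simp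
  next
    case False
    then have "\<lfloor>y\<rfloor> = \<lfloor>x\<rfloor>" using that unfolding n_def by (simp add: floor_eq_iff)
    then show ?thesis by (simp add: frac_def n_def)
  qed
  have onL: "s (frac y) = s (y - (n - 1))" if "y \<in> {n-1..n}" for y
  proof (cases "y = n")
    case True
    have "y \<in> \<int>" using True unfolding n_def by simp
    then have "frac y = 0" by simp
    then have "s (frac y) = s 0" by (simp only:)
    moreover have "y - (n - 1) = 1" using True by simp
    ultimately show ?thesis using s1 by simp
  next
    case False
    then have "\<lfloor>y\<rfloor> = \<lfloor>x\<rfloor> - 1" using that unfolding n_def by (simp add: floor_eq_iff)
    then show ?thesis by (simp add: frac_def n_def)
  qed
  show ?thesis
  proof (cases "x = n")
    case False
    then have x01: "0 < x - n" "x - n < 1" using xn by auto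
    have "at (x - n) within {0..1} = at (x - n)" using x01 by (intro at_within_Icc_at) auto
    then have ds: "(s has_real_derivative d (x - n)) (at (x - n))" using der[of "x - n"] x01 by simp
    have "((\<lambda>y. s (y + - n)) has_real_derivative d (x - n)) (at x)"
      using ds DERIV_shift[of s "d (x - n)" x "- n"] by simp
    then have "((\<lambda>y. s (y - n)) has_real_derivative d (x - n)) (at x)" by simp
    then have "((\<lambda>y. s (frac y)) has_real_derivative d (x - n)) (at x)"
      by (rule has_field_derivative_transform_within_open[of _ _ _ "{n<..<n+1}"]) (use False xn onR in auto)
    then show ?thesis using fr by simp
  next
    case True
    have R: "((\<lambda>y. s (y + - n)) has_real_derivative d 0) (at (0 - - n) within {0 - - n..1 - - n})"
      by (rule deriv_shift_within) (rule der, simp)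
    have R': "((\<lambda>y. s (frac y)) has_real_derivative d 0) (at x within {n..n+1})"
      by (rule has_field_derivative_transform_within[OF _ zero_less_one]) (use R True onR in \<open>auto simp: add.commute\<close>)
    have L: "((\<lambda>y. s (y + - (n - 1))) has_real_derivative d 1) (at (1 - - (n - 1)) within {0 - - (n - 1)..1 - - (n - 1)})"
      by (rule deriv_shift_within) (rule der, simp)
    have e1: "1 - - (n - 1) = n" "0 - - (n - 1) = n - 1" by simp_all
    have e2: "(\<lambda>y. s (y + - (n - 1))) = (\<lambda>y. s (y - (n - 1)))" by (simp only: diff_conv_add_uminus)
    have L2: "((\<lambda>y. s (y - (n - 1))) has_real_derivative d 0) (at x within {n-1..n})"
      using L unfolding e1 e2 d1 True .
    have L': "((\<lambda>y. s (frac y)) has_real_derivative d 0) (at x within {n-1..n})"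
    proof (rule has_field_derivative_transform_within[OF L2 zero_less_one])
      show "x \<in> {n-1..n}" using True by simp
      fix y assume "y \<in> {n-1..n}"
      then show "s (y - (n - 1)) = s (frac y)" using onL by simp
    qed
    have "((\<lambda>y. s (frac y)) has_real_derivative d 0) (at x within ({n-1..n} \<union> {n..n+1}))"
      by (rule deriv_within_Un[OF L' R'])
    moreover have "{n-1..n} \<union> {n..n+1} = {n-1..n+1}" by auto
    moreover have "at x within {n-1..n+1} = at x" using True by (intro at_within_Icc_at) auto
    ultimately have "((\<lambda>y. s (frac y)) has_real_derivative d 0) (at x)" by simp
    moreover have "frac x = 0" using fr True by simp
    ultimately show ?thesis by (simp only:)
  qed
qed

lemma range_K:
  fixes f K V :: "real \<Rightarrow> real"
  assumes per: "\<forall>x. f (x + 1) = f x" and der: "\<And>x. (f has_real_derivative H - V x - K (f x)) (at x)"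
    and Vb: "\<And>s. \<bar>V s\<bar> \<le> BV"
  shows "H - BV \<le> K (f x)" "K (f x) \<le> H + BV"
proof -
  show "H - BV \<le> K (f x)"
  proof (rule ccontr)
    assume A: "\<not> H - BV \<le> K (f x)"
    define w where "w y = f y - f x" for y
    have "w x \<noteq> 0"
    proof (rule periodic_nozero[of w "\<lambda>y. H - V y - K (f y)"])
      show "\<forall>y. w (y + 1) = w y" using per by (simp add: w_def)
      fix y
      show "(w has_real_derivative H - V y - K (f y)) (at y)"
        unfolding w_def using DERIV_diff[OF der[of y] DERIV_const[of "f x"]] by simp
      assume "w y = 0"
      then have "f y = f x" by (simp add: w_def)
      then show "H - V y - K (f y) > 0" using A Vb[of y] unfolding abs_le_iff by simp
    qed
    then show False by (simp add: w_def)
  qed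
  show "K (f x) \<le> H + BV"
  proof (rule ccontr)
    assume A: "\<not> K (f x) \<le> H + BV"
    define w where "w y = f x - f y" for y
    have "w x \<noteq> 0"
    proof (rule periodic_nozero[of w "\<lambda>y. - (H - V y - K (f y))"])
      show "\<forall>y. w (y + 1) = w y" using per by (simp add: w_def)
      fix y
      show "(w has_real_derivative - (H - V y - K (f y))) (at y)"
        unfolding w_def using DERIV_diff[OF DERIV_const[of "f x"] der[of y]] by simp
      assume "w y = 0"
      then have "f y = f x" by (simp add: w_def)
      then show "- (H - V y - K (f y)) > 0" using A Vb[of y] unfolding abs_le_iff by simp
    qed
    then show False by (simp add: w_def)
  qed
qed

context pic_setup begin

lemma per_sol:
  assumes s1: "sol H a 1 = a" and Vper: "\<forall>x. V (x + 1) = V x"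
  shows "((\<lambda>x. sol H a (frac x)) has_real_derivative H - V x - K (sol H a (frac x))) (at x)"
    "sol H a (frac (x + 1)) = sol H a (frac x)"
    "t \<in> {0..1} \<Longrightarrow> sol H a (frac t) = sol H a t"
proof -
  have "((\<lambda>x. sol H a (frac x)) has_real_derivative (\<lambda>t. H - V t - K (sol H a t)) (frac x)) (at x)"
  proof (rule glue)
    show "\<And>t. t \<in> {0..1} \<Longrightarrow> (sol H a has_real_derivative H - V t - K (sol H a t)) (at t within {0..1})"
      by (rule sol_deriv_within)
    show "sol H a 1 = sol H a 0" using s1 sol_0 by simp
    show "H - V 1 - K (sol H a 1) = H - V 0 - K (sol H a 0)" using s1 sol_0 Vper[rule_format, of 0] by simp
  qed
  moreover have "V (frac x) = V x" using periodic_frac[OF Vper, of x] by simp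
  ultimately show "((\<lambda>x. sol H a (frac x)) has_real_derivative H - V x - K (sol H a (frac x))) (at x)" by simp
  show "sol H a (frac (x + 1)) = sol H a (frac x)" by (simp add: frac_1_eq)
  assume t: "t \<in> {0..1}"
  show "sol H a (frac t) = sol H a t"
  proof (cases "t = 1")
    case True then show ?thesis using s1 sol_0 by simp
  next
    case False then show ?thesis using t by simp
  qed
qed

lemma Kc_pos: "Kc > 0"
  unfolding Kc_def using L by (simp add: add_pos_pos)

lemma P_cont: "continuous_on S (\<lambda>H. sol H a 1)"
proof (rule lipschitz_on_continuous_on)
  show "Kc-lipschitz_on S (\<lambda>H. sol H a 1)"
  proof (rule lipschitz_onI)
    fix x y show "dist (sol x a 1) (sol y a 1) \<le> Kc * dist x y"
      using P_stab[of x a y a] by (simp add: dist_real_def)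
  qed (use Kc_pos in simp)
qed

lemma ex1_H: "\<exists>!H. sol H a 1 = a"
proof (rule ex_ex1I)
  define c where "c = BV + BK"
  have c: "c \<ge> 0" using Vb[of 0] Kb[of 0] unfolding c_def by linarith
  have "sol (-c) a 1 \<le> a" using P_bounds(2)[of "-c" a] by (simp add: c_def)
  moreover have "a \<le> sol c a 1" using P_bounds(1)[of a c] by (simp add: c_def)
  ultimately show "\<exists>H. sol H a 1 = a"
    using IVT'[of "\<lambda>H. sol H a 1" "-c" a c, OF _ _ _ P_cont] c by auto
next
  fix H1 H2 assume "sol H1 a 1 = a" "sol H2 a 1 = a"
  then show "H1 = H2" using P_mono[of H1 H2 a] P_mono[of H2 H1 a] by (cases H1 H2 rule: linorder_cases) auto
qed

definition "hsel a = (THE H. sol H a 1 = a)"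

lemma hsel: "sol (hsel a) a 1 = a"
  unfolding hsel_def by (rule theI'[OF ex1_H])

lemma hsel_le: "sol H a 1 > a \<Longrightarrow> hsel a < H"
  using P_mono[of H "hsel a" a] hsel[of a] by (cases "hsel a < H") (auto simp: not_less less_le)

lemma hsel_ge: "sol H a 1 < a \<Longrightarrow> H < hsel a"
  using P_mono[of "hsel a" H a] hsel[of a] by (cases "H < hsel a") (auto simp: not_less less_le)

lemma hsel_cont: "continuous_on S hsel"
proof -
  have "\<exists>d>0. \<forall>a'. dist a' a < d \<longrightarrow> dist (hsel a') (hsel a) < e" if e: "e > 0" for a e
  proof -
    define h where "h = hsel a"
    have gp: "sol (h + e) a 1 - a > 0" using P_mono[of h "h + e" a] hsel[of a] e by (simp add: h_def)
    have gm: "a - sol (h - e) a 1 > 0" using P_mono[of "h - e" h a] hsel[of a] e by (simp add: h_def)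
    define d where "d = min (sol (h + e) a 1 - a) (a - sol (h - e) a 1) / (Kc + 1)"
    have Kc1: "Kc + 1 > 0" using Kc_pos by simp
    have d: "d > 0" unfolding d_def using gp gm Kc1 by simp
    have "dist (hsel a') (hsel a) < e" if a': "dist a' a < d" for a'
    proof -
      have dd: "(Kc + 1) * \<bar>a' - a\<bar> < min (sol (h + e) a 1 - a) (a - sol (h - e) a 1)"
        using a' Kc1 unfolding d_def dist_real_def by (simp add: field_simps)
      have s1: "\<bar>sol (h + e) a' 1 - sol (h + e) a 1\<bar> \<le> Kc * \<bar>a' - a\<bar>" using P_stab[of "h + e" a' "h + e" a] by simp
      have s2: "\<bar>sol (h - e) a' 1 - sol (h - e) a 1\<bar> \<le> Kc * \<bar>a' - a\<bar>" using P_stab[of "h - e" a' "h - e" a] by simp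
      have "sol (h + e) a' 1 > a'" using dd s1 unfolding abs_le_iff min_def by (auto split: if_splits simp: algebra_simps abs_if)
      then have u: "hsel a' < h + e" by (rule hsel_le)
      have "sol (h - e) a' 1 < a'" using dd s2 unfolding abs_le_iff min_def by (auto split: if_splits simp: algebra_simps abs_if)
      then have l: "h - e < hsel a'" by (rule hsel_ge)
      show ?thesis using u l by (simp add: dist_real_def h_def abs_less_iff)
    qed
    then show ?thesis using d by blast
  qed
  then show ?thesis unfolding continuous_on_iff by blast
qed

lemma mean_cont: "continuous_on S (\<lambda>a. integral {0..1} (sol (hsel a) a))"
proof -
  have lip: "continuous_on UNIV (\<lambda>p. integral {0..1} (sol (fst p) (snd p)))"
  proof (rule lipschitz_on_continuous_on)
    show "(2 * Kc)-lipschitz_on UNIV (\<lambda>p. integral {0..1} (sol (fst p) (snd p)))"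
    proof (rule lipschitz_onI)
      fix p q :: "real \<times> real"
      have "\<bar>integral {0..1} (sol (fst p) (snd p)) - integral {0..1} (sol (fst q) (snd q))\<bar>
          \<le> Kc * (\<bar>snd p - snd q\<bar> + \<bar>fst p - fst q\<bar>)" by (rule mean_stab)
      also have "\<dots> \<le> Kc * (dist p q + dist p q)"
        using dist_fst_le[of p q] dist_snd_le[of p q] Kc_pos
        by (intro mult_left_mono add_mono) (auto simp: dist_real_def)
      finally show "dist (integral {0..1} (sol (fst p) (snd p))) (integral {0..1} (sol (fst q) (snd q))) \<le> 2 * Kc * dist p q"
        by (simp add: dist_real_def)
    qed (use Kc_pos in simp)
  qed
  have "continuous_on S (\<lambda>a. (hsel a, a))" by (intro continuous_on_Pair hsel_cont continuous_on_id)
  from continuous_on_compose[OF this continuous_on_subset[OF lip]]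
  show ?thesis by (simp add: o_def)
qed

lemma shoot:
  assumes a12: "a1 \<le> a2"
    and m1: "integral {0..1} (sol (hsel a1) a1) \<le> \<theta>"
    and m2: "\<theta> \<le> integral {0..1} (sol (hsel a2) a2)"
  shows "\<exists>a\<in>{a1..a2}. integral {0..1} (sol (hsel a) a) = \<theta>"
  using IVT'[of "\<lambda>a. integral {0..1} (sol (hsel a) a)" a1 \<theta> a2, OF m1 m2 a12 mean_cont] by auto

end

lemma existence:
  fixes G V :: "real \<Rightarrow> real" and \<theta> :: real
  assumes G: "C1 G" and coer: "coercive G" and LV: "Lip V" and PV: "periodic1 V"
  shows "\<exists>H f. C1 f \<and> periodic1 f \<and> integral {0..1} f = \<theta> \<and> (\<forall>x. deriv f x + G (f x) + V x = H)"
proof -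
  have Vper: "\<forall>x. V (x + 1) = V x" using PV by (simp add: periodic1_def)
  obtain LV0 where "LV0-lipschitz_on UNIV V" using LV by (auto simp: Lip_def)
  then have Vc: "continuous_on UNIV V" by (rule lipschitz_on_continuous_on)
  obtain BV where BV: "BV \<ge> 0" "\<And>x. \<bar>V x\<bar> \<le> BV" using periodic_bounded[OF Vc PV] by blast
  define \<omega> where "\<omega> = 2 * BV"
  have Gtop: "\<forall>Z. eventually (\<lambda>x. Z \<le> G x) at_top" using coer unfolding coercive_def filterlim_at_top by blast
  have Gbot: "\<forall>Z. eventually (\<lambda>x. Z \<le> G x) at_bot" using coer unfolding coercive_def filterlim_at_top by blast
  have top: "\<exists>N. \<forall>p\<ge>N. Z \<le> G p" for Z using Gtop unfolding eventually_at_top_linorder by blast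
  have bot: "\<exists>N. \<forall>p\<le>N. Z \<le> G p" for Z using Gbot unfolding eventually_at_bot_linorder by blast
  define c0 where "c0 = G \<theta> + \<omega> + 1"
  obtain N1 where N1: "\<And>p. p \<ge> N1 \<Longrightarrow> c0 \<le> G p" using top[of c0] by blast
  obtain N2 where N2: "\<And>p. p \<le> N2 \<Longrightarrow> c0 \<le> G p" using bot[of c0] by blast
  define a2 where "a2 = max N1 (\<theta> + 1)"
  define a1 where "a1 = min N2 (\<theta> - 1)"
  have a2: "\<theta> < a2" "c0 \<le> G a2" using N1[of a2] by (auto simp: a2_def)
  have a1: "a1 < \<theta>" "c0 \<le> G a1" using N2[of a1] by (auto simp: a1_def)
  have Gcont: "continuous_on S G" for S by (rule C1_cont[OF G])
  obtain KM where KM: "\<And>x. x \<in> {a1..a2} \<Longrightarrow> \<bar>G x\<bar> \<le> KM" using cont_bounded_on[OF Gcont] by blast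
  define c1 where "c1 = KM + \<omega> + 1"
  obtain N3 where N3: "\<And>p. p \<ge> N3 \<Longrightarrow> c1 \<le> G p" using top[of c1] by blast
  obtain N4 where N4: "\<And>p. p \<le> N4 \<Longrightarrow> c1 \<le> G p" using bot[of c1] by blast
  define R where "R = max (max N3 (- N4)) (max \<bar>a1\<bar> \<bar>a2\<bar>) + 1"
  have Rbig: "\<And>p. R \<le> \<bar>p\<bar> \<Longrightarrow> c1 \<le> G p"
  proof -
    fix p assume "R \<le> \<bar>p\<bar>"
    then have "p \<ge> N3 \<or> p \<le> N4" unfolding R_def by (cases "p \<ge> 0") auto
    then show "c1 \<le> G p" using N3 N4 by blast
  qed
  have Ra: "\<bar>a1\<bar> < R" "\<bar>a2\<bar> < R" unfolding R_def by auto
  define cl where "cl p = max (- R) (min R p)" for p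
  have cl_in: "cl p \<in> {-R..R}" for p using Ra unfolding cl_def by auto
  have cl_id: "\<bar>p\<bar> \<le> R \<Longrightarrow> cl p = p" for p unfolding cl_def by auto
  have cl_lip: "\<bar>cl p - cl q\<bar> \<le> \<bar>p - q\<bar>" for p q unfolding cl_def by (auto simp: abs_if)
  define Gt where "Gt p = G (cl p)" for p
  obtain LG where LG: "LG \<ge> 0" "\<And>x y. x \<in> {-R..R} \<Longrightarrow> y \<in> {-R..R} \<Longrightarrow> \<bar>G x - G y\<bar> \<le> LG * \<bar>x - y\<bar>"
    using C1_lip[OF G, of R] by blast
  define L where "L = LG + 1"
  obtain BK where BK: "\<And>x. x \<in> {-R..R} \<Longrightarrow> \<bar>G x\<bar> \<le> BK" using cont_bounded_on[OF Gcont] by blast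
  have cl_cont: "continuous_on UNIV cl" unfolding cl_def by (intro continuous_intros)
  interpret P: pic_setup V Gt L BV BK
  proof
    show "0 < L" using LG by (simp add: L_def)
    show "continuous_on UNIV V" by (rule Vc)
    show "continuous_on UNIV Gt" unfolding Gt_def by (rule continuous_on_compose2[OF Gcont cl_cont]) auto
    fix x y
    have "\<bar>Gt x - Gt y\<bar> \<le> LG * \<bar>cl x - cl y\<bar>" unfolding Gt_def by (rule LG(2)[OF cl_in cl_in])
    also have "\<dots> \<le> LG * \<bar>x - y\<bar>" by (rule mult_left_mono[OF cl_lip LG(1)])
    also have "\<dots> \<le> L * \<bar>x - y\<bar>" by (simp add: L_def mult_right_mono)
    finally show "\<bar>Gt x - Gt y\<bar> \<le> L * \<bar>x - y\<bar>" .
    show "\<bar>V x\<bar> \<le> BV" by (rule BV(2))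
    show "\<bar>Gt y\<bar> \<le> BK" unfolding Gt_def by (rule BK[OF cl_in])
  qed
  define fp where "fp H a x = P.sol H a (frac x)" for H a x
  have fp_der: "((fp (P.hsel a) a) has_real_derivative (P.hsel a) - V x - Gt (fp (P.hsel a) a x)) (at x)" for a x
    unfolding fp_def by (rule P.per_sol(1)[OF P.hsel Vper])
  have fp_per: "\<forall>x. fp (P.hsel a) a (x + 1) = fp (P.hsel a) a x" for a
    unfolding fp_def using P.per_sol(2)[OF P.hsel Vper] by blast
  have fp_sol: "t \<in> {0..1} \<Longrightarrow> fp (P.hsel a) a t = P.sol (P.hsel a) a t" for a t
    unfolding fp_def by (rule P.per_sol(3)[OF P.hsel Vper])
  have osc: "\<bar>Gt (fp (P.hsel a) a x) - Gt (fp (P.hsel a) a y)\<bar> \<le> \<omega>" for a x y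
    using range_K[OF fp_per fp_der BV(2), of a x] range_K[OF fp_per fp_der BV(2), of a y]
    unfolding \<omega>_def abs_le_iff by linarith
  have sol0: "P.sol (P.hsel a) a 0 = a" for a by (rule P.sol_0)
  have osc_sol: "\<bar>Gt (P.sol (P.hsel a) a t) - Gt a\<bar> \<le> \<omega>" if "t \<in> {0..1}" for a t
    using osc[of a t 0] fp_sol[OF that, of a] fp_sol[of 0 a] sol0[of a] by simp
  have solc: "continuous_on S (P.sol H a)" for S H a by (rule continuous_on_subset[OF P.sol_cont]) simp
  have Gt_id: "\<bar>p\<bar> \<le> R \<Longrightarrow> Gt p = G p" for p by (simp add: Gt_def cl_id)
  have th_R: "\<bar>\<theta>\<bar> \<le> R" using a1 a2 Ra by auto
  have m1: "integral {0..1} (P.sol (P.hsel a1) a1) \<le> \<theta>"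
  proof -
    have "P.sol (P.hsel a1) a1 t \<le> \<theta>" if t: "t \<in> {0..1}" for t
    proof (rule ccontr)
      assume "\<not> ?thesis"
      then obtain y where y: "0 \<le> y" "y \<le> t" "P.sol (P.hsel a1) a1 y = \<theta>"
        using IVT'[of "P.sol (P.hsel a1) a1" 0 \<theta> t, OF _ _ _ solc] sol0[of a1] a1 t by auto
      have "y \<in> {0..1}" using y t by auto
      from osc_sol[OF this, of a1] have "\<bar>G \<theta> - G a1\<bar> \<le> \<omega>"
        using y Gt_id[OF th_R] Gt_id[of a1] Ra by simp
      then show False using a1 unfolding c0_def by simp
    qed
    then have "integral {0..1} (P.sol (P.hsel a1) a1) \<le> integral {0..1} (\<lambda>x::real. \<theta>)"
      by (intro Henstock_Kurzweil_Integration.integral_le integrable_continuous_interval solc) auto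
    then show ?thesis by simp
  qed
  have m2: "\<theta> \<le> integral {0..1} (P.sol (P.hsel a2) a2)"
  proof -
    have "\<theta> \<le> P.sol (P.hsel a2) a2 t" if t: "t \<in> {0..1}" for t
    proof (rule ccontr)
      assume "\<not> ?thesis"
      then obtain y where y: "0 \<le> y" "y \<le> t" "P.sol (P.hsel a2) a2 y = \<theta>"
        using IVT2'[of "P.sol (P.hsel a2) a2" t \<theta> 0, OF _ _ _ solc] sol0[of a2] a2 t by auto
      have "y \<in> {0..1}" using y t by auto
      from osc_sol[OF this, of a2] have "\<bar>G \<theta> - G a2\<bar> \<le> \<omega>"
        using y Gt_id[OF th_R] Gt_id[of a2] Ra by simp
      then show False using a2 unfolding c0_def by simp
    qed
    then have "integral {0..1} (\<lambda>x::real. \<theta>) \<le> integral {0..1} (P.sol (P.hsel a2) a2)"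
      by (intro Henstock_Kurzweil_Integration.integral_le integrable_continuous_interval solc) auto
    then show ?thesis by simp
  qed
  have "a1 \<le> a2" using a1 a2 by simp
  from P.shoot[OF this m1 m2] obtain a where a: "a \<in> {a1..a2}" "integral {0..1} (P.sol (P.hsel a) a) = \<theta>"
    by blast
  define H where "H = P.hsel a"
  define f where "f = fp H a"
  have aR: "\<bar>a\<bar> < R" using a Ra by auto
  have aR2: "- R < a" "a < R" using aR by (simp_all add: abs_less_iff)
  have Ga: "G a \<le> KM" using KM[OF a(1)] by simp
  have fR: "\<bar>f x\<bar> < R" for x
  proof (rule ccontr)
    assume A: "\<not> \<bar>f x\<bar> < R"
    define t where "t = frac x"
    have t: "t \<in> {0..1}" unfolding t_def by (simp add: frac_lt_1 less_imp_le)
    have ft: "f x = P.sol H a t" unfolding f_def fp_def t_def by simp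
    have "\<exists>y\<in>{0..1}. \<bar>P.sol H a y\<bar> = R"
    proof (cases "f x \<ge> R")
      case True
      then obtain y where "0 \<le> y" "y \<le> t" "P.sol H a y = R"
        using IVT'[of "P.sol H a" 0 R t, OF _ _ _ solc] sol0[of a] aR2 t ft unfolding H_def by auto
      then show ?thesis using t Ra by (intro bexI[of _ y]) auto
    next
      case False
      then have "f x \<le> - R" using A by linarith
      then obtain y where "0 \<le> y" "y \<le> t" "P.sol H a y = - R"
        using IVT2'[of "P.sol H a" t "- R" 0, OF _ _ _ solc] sol0[of a] aR2 t ft unfolding H_def by auto
      then show ?thesis using t Ra by (intro bexI[of _ y]) auto
    qed
    then obtain y where y: "y \<in> {0..1}" "\<bar>P.sol H a y\<bar> = R" by blast
    have "c1 \<le> G (P.sol H a y)" using Rbig y(2) by simp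
    moreover have "Gt (P.sol H a y) = G (P.sol H a y)" using y(2) by (intro Gt_id) simp
    moreover have "Gt a = G a" using aR by (intro Gt_id) simp
    moreover have "\<bar>Gt (P.sol H a y) - Gt a\<bar> \<le> \<omega>" using osc_sol[OF y(1), of a] unfolding H_def .
    ultimately show False using Ga unfolding c1_def by simp
  qed
  have fd: "(f has_real_derivative H - V x - G (f x)) (at x)" for x
  proof -
    have "Gt (f x) = G (f x)" using fR[of x] by (intro Gt_id) simp
    then show ?thesis using fp_der[of a x] unfolding f_def H_def by simp
  qed
  have fcont: "continuous_on UNIV f"
    by (rule continuous_at_imp_continuous_on) (use fd DERIV_isCont in blast)
  have dfe: "deriv f x = H - V x - G (f x)" for x by (rule DERIV_imp_deriv[OF fd])
  have "C1 f"
    unfolding C1_def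
  proof
    show "f differentiable_on UNIV"
      unfolding differentiable_on_def real_differentiable_def using fd by blast
    have "continuous_on UNIV (\<lambda>x. G (f x))" by (rule continuous_on_compose2[OF Gcont fcont]) auto
    then have "continuous_on UNIV (\<lambda>x. H - V x - G (f x))" by (intro continuous_intros Vc)
    moreover have "deriv f = (\<lambda>x. H - V x - G (f x))" using dfe by (rule ext)
    ultimately show "continuous_on UNIV (deriv f)" by simp
  qed
  moreover have "periodic1 f" using fp_per[of a] unfolding periodic1_def f_def H_def by blast
  moreover have "integral {0..1} f = \<theta>"
  proof -
    have "integral {0..1} f = integral {0..1} (P.sol H a)"
      by (rule integral_cong) (simp add: f_def H_def fp_sol)
    then show ?thesis using a(2) unfolding H_def by simp
  qed
  moreover have "\<forall>x. deriv f x + G (f x) + V x = H" using dfe by simp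
  ultimately show ?thesis by blast
qed

theorem lemma4p1:
  fixes G V :: "real \<Rightarrow> real" and \<theta> :: real
  assumes "C1 G" and "coercive G"
    and "Lip V" and "periodic1 V"
  shows "\<exists>!(Hbar, f). C1 f \<and> periodic1 f \<and> integral {0..1} f = \<theta> \<and>
            (\<forall>x. deriv f x + G (f x) + V x = Hbar)"
proof -
  obtain H f where Hf: "C1 f" "periodic1 f" "integral {0..1} f = \<theta>" "\<forall>x. deriv f x + G (f x) + V x = H"
    using existence[OF assms] by blast
  obtain LV0 where "LV0-lipschitz_on UNIV V" using assms(3) by (auto simp: Lip_def)
  then have Vc: "continuous_on UNIV V" by (rule lipschitz_on_continuous_on)
  show ?thesis
  proof (rule ex1I[of _ "(H, f)"])
    show "case (H, f) of (Hbar, f) \<Rightarrow> C1 f \<and> periodic1 f \<and> integral {0..1} f = \<theta> \<and> (\<forall>x. deriv f x + G (f x) + V x = Hbar)"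
      using Hf by simp
  next
    fix p assume p: "case p of (Hbar, f) \<Rightarrow> C1 f \<and> periodic1 f \<and> integral {0..1} f = \<theta> \<and> (\<forall>x. deriv f x + G (f x) + V x = Hbar)"
    obtain H2 f2 where p2: "p = (H2, f2)" by (cases p)
    have "H = H2 \<and> f = f2"
      using uniqueness[OF assms(1) Vc Hf] p unfolding p2 by auto
    then show "p = (H, f)" using p2 by simp
  qed
qed

end
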